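(* Let $\Omega$ be a finite set, $(H_i\mid i\in\Omega)$ finite abelian groups, $\mathbf{H}=\prod_{i\in\Omega}H_i$, and let $\mathbf{P}=(\Omega,\preccurlyeq_{\mathbf{P}})$ be a hierarchical poset. Then the dual partition $\Lambda$ of $\mathcal{Q}(\mathbf{H},\mathbf{P})$ is finer than $\mathcal{Q}(\hat{\mathbf{H}},\overline{\mathbf{P}})$.
   Context: $\hat{\mathbf{H}}$ is the character group of $\mathbf{H}$, identified with $\prod_i\hat{H_i}$ via $\alpha(\beta)=\prod_i\alpha_{(i)}(\beta_{(i)})$; $\mathrm{supp}$ of a codeword is the set of coordinates where it is not the identity. $\overline{\mathbf{P}}$ is the dual poset. For a poset $\mathbf{Q}$ on $\Omega$, $\langle B\rangle_{\mathbf{Q}}$ is the down-closure of $B$ in $\mathbf{Q}$ and $\mathrm{wt}_{\mathbf{Q}}(\beta)=|\langle\mathrm{supp}(\beta)\rangle_{\mathbf{Q}}|$. $\mathcal{Q}(\mathbf{H},\mathbf{P})$ (resp. $\mathcal{Q}(\hat{\mathbf{H}},\overline{\mathbf{P}})$) is the partition of $\mathbf{H}$ (resp. $\hat{\mathbf{H}}$) into classes of equal $\mathbf{P}$-weight (resp. $\overline{\mathbf{P}}$-weight). $\Lambda$ is the partition of $\hat{\mathbf{H}}$ with $\chi\sim\psi$ iff $\sum_{b\in B}\chi(b)=\sum_{b\in B}\psi(b)$ for every block $B$ of $\mathcal{Q}(\mathbf{H},\mathbf{P})$. A partition is finer than another if each of its blocks lies in a block of the other. $\mathrm{len}(y)$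 is the largest cardinality of a chain in $\mathbf{P}$ with greatest element $y$; $\mathbf{P}$ is hierarchical if $\mathrm{len}(u)+1\leqslant\mathrm{len}(v)$ implies $u\preccurlyeq_{\mathbf{P}}v$. *)

theory Defs
  imports "HOL-Algebra.Group" Complex_Main
begin

definition poset_on :: "'i set \<Rightarrow> ('i \<Rightarrow> 'i \<Rightarrow> bool) \<Rightarrow> bool" where
  "poset_on \<Omega> leq \<longleftrightarrow>
     (\<forall>x\<in>\<Omega>. leq x x) \<and>
     (\<forall>x\<in>\<Omega>. \<forall>y\<in>\<Omega>. leq x y \<and> leq y x \<longrightarrow> x = y) \<and>
     (\<forall>x\<in>\<Omega>. \<forall>y\<in>\<Omega>. \<forall>z\<in>\<Omega>. leq x y \<and> leq y z \<longrightarrow> leq x z)"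

definition dual_order :: "('i \<Rightarrow> 'i \<Rightarrow> bool) \<Rightarrow> 'i \<Rightarrow> 'i \<Rightarrow> bool" where
  "dual_order leq x y \<longleftrightarrow> leq y x"

definition chain_top :: "'i set \<Rightarrow> ('i \<Rightarrow> 'i \<Rightarrow> bool) \<Rightarrow> 'i \<Rightarrow> 'i set \<Rightarrow> bool" where
  "chain_top \<Omega> leq y C \<longleftrightarrow> C \<subseteq> \<Omega> \<and> y \<in> C \<and>
     (\<forall>x\<in>C. \<forall>z\<in>C. leq x z \<or> leq z x) \<and> (\<forall>x\<in>C. leq x y)"

definition len :: "'i set \<Rightarrow> ('i \<Rightarrow> 'i \<Rightarrow> bool) \<Rightarrow> 'i \<Rightarrow> nat" where
  "len \<Omega> leq y = Max (card ` {C. chain_top \<Omega> leq y C})"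

definition hierarchical :: "'i set \<Rightarrow> ('i \<Rightarrow> 'i \<Rightarrow> bool) \<Rightarrow> bool" where
  "hierarchical \<Omega> leq \<longleftrightarrow>
     (\<forall>u\<in>\<Omega>. \<forall>v\<in>\<Omega>. len \<Omega> leq u + 1 \<le> len \<Omega> leq v \<longrightarrow> leq u v)"

definition down_closure :: "'i set \<Rightarrow> ('i \<Rightarrow> 'i \<Rightarrow> bool) \<Rightarrow> 'i set \<Rightarrow> 'i set" where
  "down_closure \<Omega> leq B = {x\<in>\<Omega>. \<exists>b\<in>B. leq x b}"

definition poset_wt :: "'i set \<Rightarrow> ('i \<Rightarrow> 'i \<Rightarrow> bool) \<Rightarrow> 'i set \<Rightarrow> nat" where
  "poset_wt \<Omega> leq S = card (down_closure \<Omega> leq S)"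

definition prod_carrier :: "'i set \<Rightarrow> ('i \<Rightarrow> ('a, 'b) monoid_scheme) \<Rightarrow> ('i \<Rightarrow> 'a) set" where
  "prod_carrier \<Omega> G = (\<Pi>\<^sub>E i\<in>\<Omega>. carrier (G i))"

definition characters :: "('a, 'b) monoid_scheme \<Rightarrow> ('a \<Rightarrow> complex) set" where
  "characters G = {\<chi>. \<chi> \<in> extensional (carrier G) \<and>
      (\<forall>x\<in>carrier G. norm (\<chi> x) = 1) \<and>
      (\<forall>x\<in>carrier G. \<forall>y\<in>carrier G. \<chi> (x \<otimes>\<^bsub>G\<^esub> y) = \<chi> x * \<chi> y)}"

definition trivial_char :: "('a, 'b) monoid_scheme \<Rightarrow> 'a \<Rightarrow> complex" where
  "trivial_char G = (\<lambda>x\<in>carrier G. 1)"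

text \<open>The character group of H, identified with the product of the character groups.\<close>
definition dual_carrier :: "'i set \<Rightarrow> ('i \<Rightarrow> ('a, 'b) monoid_scheme) \<Rightarrow> ('i \<Rightarrow> 'a \<Rightarrow> complex) set" where
  "dual_carrier \<Omega> G = (\<Pi>\<^sub>E i\<in>\<Omega>. characters (G i))"

definition char_eval :: "'i set \<Rightarrow> ('i \<Rightarrow> 'a \<Rightarrow> complex) \<Rightarrow> ('i \<Rightarrow> 'a) \<Rightarrow> complex" where
  "char_eval \<Omega> \<alpha> \<beta> = (\<Prod>i\<in>\<Omega>. \<alpha> i (\<beta> i))"

definition supp_H :: "'i set \<Rightarrow> ('i \<Rightarrow> ('a, 'b) monoid_scheme) \<Rightarrow> ('i \<Rightarrow> 'a) \<Rightarrow> 'i set" where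
  "supp_H \<Omega> G \<beta> = {i\<in>\<Omega>. \<beta> i \<noteq> \<one>\<^bsub>G i\<^esub>}"

definition supp_dual :: "'i set \<Rightarrow> ('i \<Rightarrow> ('a, 'b) monoid_scheme) \<Rightarrow> ('i \<Rightarrow> 'a \<Rightarrow> complex) \<Rightarrow> 'i set" where
  "supp_dual \<Omega> G \<alpha> = {i\<in>\<Omega>. \<alpha> i \<noteq> trivial_char (G i)}"

definition level_partition :: "'x set \<Rightarrow> ('x \<Rightarrow> nat) \<Rightarrow> 'x set set" where
  "level_partition X w = (\<lambda>x. {y\<in>X. w y = w x}) ` X"

definition Q_H :: "'i set \<Rightarrow> ('i \<Rightarrow> ('a, 'b) monoid_scheme) \<Rightarrow> ('i \<Rightarrow> 'i \<Rightarrow> bool) \<Rightarrow> ('i \<Rightarrow> 'a) set set" where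
  "Q_H \<Omega> G leq = level_partition (prod_carrier \<Omega> G) (\<lambda>\<beta>. poset_wt \<Omega> leq (supp_H \<Omega> G \<beta>))"

definition Q_dual :: "'i set \<Rightarrow> ('i \<Rightarrow> ('a, 'b) monoid_scheme) \<Rightarrow> ('i \<Rightarrow> 'i \<Rightarrow> bool) \<Rightarrow> ('i \<Rightarrow> 'a \<Rightarrow> complex) set set" where
  "Q_dual \<Omega> G leq = level_partition (dual_carrier \<Omega> G)
     (\<lambda>\<alpha>. poset_wt \<Omega> (dual_order leq) (supp_dual \<Omega> G \<alpha>))"

definition Lambda_rel :: "'i set \<Rightarrow> ('i \<Rightarrow> ('a, 'b) monoid_scheme) \<Rightarrow> ('i \<Rightarrow> 'i \<Rightarrow> bool)
    \<Rightarrow> ('i \<Rightarrow> 'a \<Rightarrow> complex) \<Rightarrow> ('i \<Rightarrow> 'a \<Rightarrow> complex) \<Rightarrow> bool" where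
  "Lambda_rel \<Omega> G leq \<chi> \<psi> \<longleftrightarrow>
     (\<forall>B\<in>Q_H \<Omega> G leq. (\<Sum>b\<in>B. char_eval \<Omega> \<chi> b) = (\<Sum>b\<in>B. char_eval \<Omega> \<psi> b))"

definition Lambda :: "'i set \<Rightarrow> ('i \<Rightarrow> ('a, 'b) monoid_scheme) \<Rightarrow> ('i \<Rightarrow> 'i \<Rightarrow> bool) \<Rightarrow> ('i \<Rightarrow> 'a \<Rightarrow> complex) set set" where
  "Lambda \<Omega> G leq = (\<lambda>\<chi>. {\<psi>\<in>dual_carrier \<Omega> G. Lambda_rel \<Omega> G leq \<chi> \<psi>}) ` dual_carrier \<Omega> G"

definition finer :: "'x set set \<Rightarrow> 'x set set \<Rightarrow> bool" where
  "finer P Q \<longleftrightarrow> (\<forall>A\<in>P. \<exists>B\<in>Q. A \<subseteq> B)"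

end

theory Submission
  imports Defs
begin


lemma char_one:
  assumes "group H" "\<chi> \<in> characters H"
  shows "\<chi> \<one>\<^bsub>H\<^esub> = 1"
proof -
  have o: "\<one>\<^bsub>H\<^esub> \<in> carrier H" "\<one>\<^bsub>H\<^esub> \<otimes>\<^bsub>H\<^esub> \<one>\<^bsub>H\<^esub> = \<one>\<^bsub>H\<^esub>"
    using assms(1) by (auto simp: group.is_monoid)
  have n: "norm (\<chi> \<one>\<^bsub>H\<^esub>) = 1" and m: "\<chi> (\<one>\<^bsub>H\<^esub> \<otimes>\<^bsub>H\<^esub> \<one>\<^bsub>H\<^esub>) = \<chi> \<one>\<^bsub>H\<^esub> * \<chi> \<one>\<^bsub>H\<^esub>"
    using assms(2) o(1) unfolding characters_def by auto
  hence "\<chi> \<one>\<^bsub>H\<^esub> = \<chi> \<one>\<^bsub>H\<^esub> * \<chi> \<one>\<^bsub>H\<^esub>" using o by simp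
  moreover have "\<chi> \<one>\<^bsub>H\<^esub> \<noteq> 0" using n by auto
  ultimately show ?thesis
    by (metis mult_cancel_left2)
qed

lemma char_sum:
  assumes "group H" "finite (carrier H)" "\<chi> \<in> characters H"
  shows "(\<Sum>h\<in>carrier H. \<chi> h) = (if \<chi> = trivial_char H then of_nat (card (carrier H)) else 0)"
proof (cases "\<chi> = trivial_char H")
  case True
  then show ?thesis by (simp add: trivial_char_def)
next
  case False
  interpret group H by fact
  have exH: "\<chi> \<in> extensional (carrier H)" using assms(3) unfolding characters_def by auto
  have "\<exists>g\<in>carrier H. \<chi> g \<noteq> 1"
  proof (rule ccontr)
    assume "\<not> ?thesis"
    hence "\<chi> = trivial_char H" using exH unfolding trivial_char_def
      by (intro ext) (auto simp: extensional_def)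
    thus False using False by simp
  qed
  then obtain g where g: "g \<in> carrier H" "\<chi> g \<noteq> 1" by blast
  have bij: "bij_betw (\<lambda>x. g \<otimes>\<^bsub>H\<^esub> x) (carrier H) (carrier H)"
    using inj_on_cmult[OF g(1)] surj_const_mult[OF g(1)] by (simp add: bij_betw_def)
  have "(\<Sum>h\<in>carrier H. \<chi> h) = (\<Sum>h\<in>carrier H. \<chi> (g \<otimes>\<^bsub>H\<^esub> h))"
    using sum.reindex_bij_betw[OF bij, of \<chi>] by simp
  also have "\<dots> = (\<Sum>h\<in>carrier H. \<chi> g * \<chi> h)"
    using assms(3) g(1) unfolding characters_def by (intro sum.cong) auto
  also have "\<dots> = \<chi> g * (\<Sum>h\<in>carrier H. \<chi> h)" by (simp add: sum_distrib_left)
  finally have "(1 - \<chi> g) * (\<Sum>h\<in>carrier H. \<chi> h) = 0" by (simp add: algebra_simps)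
  then show ?thesis using g False by simp
qed

lemma pow_count:
  fixes f g :: "complex \<Rightarrow> complex"
  assumes eq: "\<And>t. (1 - t) ^ a * f t = (1 - t) ^ b * g t"
    and cf: "isCont f 1" and cg: "isCont g 1" and f1: "f 1 \<noteq> 0" and g1: "g 1 \<noteq> 0"
    and lt: "a < b"
  shows False
proof -
  have e: "f t = (1 - t) ^ (b - a) * g t" if "t \<noteq> 1" for t
  proof -
    have "(1 - t) ^ a * f t = (1 - t) ^ a * ((1 - t) ^ (b - a) * g t)"
      using eq[of t] lt by (simp add: power_add[symmetric])
    moreover have "(1 - t) ^ a \<noteq> 0" using that by simp
    ultimately show ?thesis by (metis mult_left_cancel)
  qed
  have c2: "isCont (\<lambda>t. (1 - t) ^ (b - a) * g t) 1"
    using cg by (intro continuous_intros) auto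
  have l1: "(f \<longlongrightarrow> f 1) (at 1)" using cf by (simp add: isCont_def)
  have l2: "((\<lambda>t. (1 - t) ^ (b - a) * g t) \<longlongrightarrow> 0) (at 1)"
    using c2 lt unfolding isCont_def by (simp add: power_0_left)
  have ev: "eventually (\<lambda>t. (1 - t) ^ (b - a) * g t = f t) (at 1)"
    using e by (auto simp: eventually_at_filter)
  have l0: "(f \<longlongrightarrow> 0) (at 1)" by (rule Lim_transform_eventually[OF l2 ev])
  have "f 1 = 0" by (rule tendsto_unique[OF at_neq_bot l1 l0])
  thus False using f1 by simp
qed



locale hs =
  fixes \<Omega> :: "'i set" and G :: "'i \<Rightarrow> ('a, 'b) monoid_scheme" and leq :: "'i \<Rightarrow> 'i \<Rightarrow> bool"
  assumes fin: "finite \<Omega>"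
    and grp: "\<And>i. i \<in> \<Omega> \<Longrightarrow> comm_group (G i)"
    and finG: "\<And>i. i \<in> \<Omega> \<Longrightarrow> finite (carrier (G i))"
    and po: "poset_on \<Omega> leq"
    and hier: "hierarchical \<Omega> leq"
begin

abbreviation lv where "lv i \<equiv> len \<Omega> leq i"

lemma prefl: "u \<in> \<Omega> \<Longrightarrow> leq u u" using po unfolding poset_on_def by blast
lemma antisym: "u \<in> \<Omega> \<Longrightarrow> v \<in> \<Omega> \<Longrightarrow> leq u v \<Longrightarrow> leq v u \<Longrightarrow> u = v"
  using po unfolding poset_on_def by blast
lemma trans: "u \<in> \<Omega> \<Longrightarrow> v \<in> \<Omega> \<Longrightarrow> w \<in> \<Omega> \<Longrightarrow> leq u v \<Longrightarrow> leq v w \<Longrightarrow> leq u w"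
  using po unfolding poset_on_def by blast

lemma chains_finite: "finite {C. chain_top \<Omega> leq y C}"
  by (rule finite_subset[of _ "Pow \<Omega>"]) (auto simp: chain_top_def fin)

lemma len_mono:
  assumes u: "u \<in> \<Omega>" and v: "v \<in> \<Omega>" and uv: "leq u v" "u \<noteq> v"
  shows "lv u < lv v"
proof -
  have ne: "{u} \<in> {C. chain_top \<Omega> leq u C}" using u prefl by (auto simp: chain_top_def)
  have "lv u \<in> card ` {C. chain_top \<Omega> leq u C}"
    unfolding len_def using chains_finite ne by (intro Max_in) auto
  then obtain C where C: "chain_top \<Omega> leq u C" "card C = lv u" by auto
  have Cs: "C \<subseteq> \<Omega>" using C by (simp add: chain_top_def)
  hence fC: "finite C" using fin finite_subset by blast
  have vC: "v \<notin> C"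
  proof
    assume "v \<in> C"
    hence "leq v u" using C by (simp add: chain_top_def)
    thus False using antisym[OF u v uv(1)] uv(2) by simp
  qed
  have ch: "chain_top \<Omega> leq v (insert v C)"
    unfolding chain_top_def
  proof (intro conjI ballI)
    show "insert v C \<subseteq> \<Omega>" using Cs v by auto
    show "v \<in> insert v C" by simp
    fix x assume x: "x \<in> insert v C"
    show "leq x v"
    proof (cases "x = v")
      case True thus ?thesis using prefl v by simp
    next
      case False
      hence "x \<in> C" using x by simp
      hence "leq x u" "x \<in> \<Omega>" using C Cs by (auto simp: chain_top_def)
      thus ?thesis using trans u v uv(1) by blast
    qed
    fix z assume z: "z \<in> insert v C"
    show "leq x z \<or> leq z x"
    proof (cases "x = v \<or> z = v")
      case True
      then show ?thesis
      proof
        assume "x = v"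
        thus ?thesis using \<open>z \<in> insert v C\<close> C Cs prefl v trans[OF _ u v _ uv(1)]
          by (auto simp: chain_top_def)
      next
        assume "z = v"
        thus ?thesis using x C Cs prefl v trans[OF _ u v _ uv(1)]
          by (auto simp: chain_top_def)
      qed
    next
      case False
      thus ?thesis using x z C by (auto simp: chain_top_def)
    qed
  qed
  have "card (insert v C) = lv u + 1" using fC vC C(2) by simp
  moreover have "card (insert v C) \<le> lv v"
    unfolding len_def using chains_finite ch by (intro Max_ge) auto
  ultimately show ?thesis by simp
qed

lemma leq_iff:
  assumes u: "u \<in> \<Omega>" and v: "v \<in> \<Omega>"
  shows "leq u v \<longleftrightarrow> (u = v \<or> lv u < lv v)"
proof
  assume "leq u v"
  thus "u = v \<or> lv u < lv v" using len_mono[OF u v] by blast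
next
  assume "u = v \<or> lv u < lv v"
  thus "leq u v"
  proof
    assume "u = v" thus ?thesis using prefl u by simp
  next
    assume "lv u < lv v"
    hence "lv u + 1 \<le> lv v" by simp
    thus ?thesis using hier u v unfolding hierarchical_def by blast
  qed
qed

definition Low where "Low m = {x\<in>\<Omega>. lv x < m}"
definition Lev where "Lev m = {x\<in>\<Omega>. lv x = m}"

lemma Low_fin: "finite (Low m)" and Lev_fin: "finite (Lev m)"
  using fin by (auto simp: Low_def Lev_def)

lemma Low_Suc: "Low (Suc m) = Low m \<union> Lev m" and Low_Lev_disj: "Low m \<inter> Lev m = {}"
  by (auto simp: Low_def Lev_def)

lemma card_Low_Suc: "card (Low (Suc m)) = card (Low m) + card (Lev m)"
  by (simp add: Low_Suc Low_Lev_disj Low_fin Lev_fin card_Un_disjoint)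

lemma Low_mono: "a \<le> b \<Longrightarrow> Low a \<subseteq> Low b" by (auto simp: Low_def)

lemma W1:
  assumes "S \<subseteq> Low m" shows "down_closure \<Omega> leq S \<subseteq> Low m"
proof
  fix x assume "x \<in> down_closure \<Omega> leq S"
  then obtain b where x: "x \<in> \<Omega>" and b: "b \<in> S" and xb: "leq x b" unfolding down_closure_def by blast
  have bL: "b \<in> \<Omega>" "lv b < m" using b assms by (auto simp: Low_def)
  have "x = b \<or> lv x < lv b" using leq_iff[OF x bL(1)] xb by blast
  hence "lv x < m" using bL by auto
  thus "x \<in> Low m" using x by (simp add: Low_def)
qed

lemma W2:
  assumes S: "S \<subseteq> Low (Suc m)" and ne: "S \<inter> Lev m \<noteq> {}"
  shows "down_closure \<Omega> leq S = Low m \<union> (S \<inter> Lev m)"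
proof
  show "down_closure \<Omega> leq S \<subseteq> Low m \<union> (S \<inter> Lev m)"
  proof
    fix x assume "x \<in> down_closure \<Omega> leq S"
    then obtain b where x: "x \<in> \<Omega>" and b: "b \<in> S" and xb: "leq x b" unfolding down_closure_def by blast
    have bL: "b \<in> \<Omega>" "lv b < Suc m" using b S by (auto simp: Low_def)
    have "x = b \<or> lv x < lv b" using leq_iff[OF x bL(1)] xb by blast
    thus "x \<in> Low m \<union> (S \<inter> Lev m)"
    proof
      assume "x = b"
      thus ?thesis using b bL x by (cases "lv x < m") (auto simp: Low_def Lev_def)
    next
      assume "lv x < lv b" thus ?thesis using x bL by (auto simp: Low_def)
    qed
  qed
next
  obtain c where c: "c \<in> S" "c \<in> \<Omega>" "lv c = m" using ne by (auto simp: Lev_def)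
  show "Low m \<union> (S \<inter> Lev m) \<subseteq> down_closure \<Omega> leq S"
  proof
    fix x assume "x \<in> Low m \<union> (S \<inter> Lev m)"
    thus "x \<in> down_closure \<Omega> leq S"
    proof
      assume "x \<in> Low m"
      hence "x \<in> \<Omega>" "lv x < lv c" using c by (auto simp: Low_def)
      hence "leq x c" using leq_iff[OF _ c(2)] by blast
      thus ?thesis using c \<open>x \<in> \<Omega>\<close> unfolding down_closure_def by blast
    next
      assume "x \<in> S \<inter> Lev m"
      hence "x \<in> \<Omega>" "x \<in> S" by (auto simp: Lev_def)
      thus ?thesis using prefl unfolding down_closure_def by blast
    qed
  qed
qed

lemma W3:
  assumes S: "S \<subseteq> \<Omega>" and b: "b \<in> S" and mb: "m < lv b"
  shows "insert b (Low (Suc m)) \<subseteq> down_closure \<Omega> leq S"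
proof
  have bO: "b \<in> \<Omega>" using S b by blast
  fix x assume "x \<in> insert b (Low (Suc m))"
  thus "x \<in> down_closure \<Omega> leq S"
  proof
    assume "x = b" thus ?thesis using bO b prefl unfolding down_closure_def by blast
  next
    assume "x \<in> Low (Suc m)"
    hence "x \<in> \<Omega>" "lv x < lv b" using mb by (auto simp: Low_def)
    hence "leq x b" using leq_iff[OF _ bO] by blast
    thus ?thesis using b \<open>x \<in> \<Omega>\<close> unfolding down_closure_def by blast
  qed
qed

end


context hs begin

lemma grpi: "i \<in> \<Omega> \<Longrightarrow> group (G i)"
  using grp unfolding comm_group_def by blast

lemma one_in: "i \<in> \<Omega> \<Longrightarrow> \<one>\<^bsub>G i\<^esub> \<in> carrier (G i)"
  using grpi group.is_monoid monoid.one_closed by blast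

definition wt where "wt \<beta> = poset_wt \<Omega> leq (supp_H \<Omega> G \<beta>)"

definition e :: "nat \<Rightarrow> complex \<Rightarrow> 'i \<Rightarrow> 'a \<Rightarrow> complex" where
  "e m t i h = (if lv i < m then 1 else if lv i = m then (if h = \<one>\<^bsub>G i\<^esub> then 1 else t)
      else (if h = \<one>\<^bsub>G i\<^esub> then 1 else 0))"

definition phi :: "nat \<Rightarrow> complex \<Rightarrow> nat \<Rightarrow> complex" where
  "phi m t w = (if w \<le> card (Low m) then 1 else if w \<le> card (Low (Suc m)) then t ^ (w - card (Low m)) else 0)"

definition sg :: "('i \<Rightarrow> 'a \<Rightarrow> complex) \<Rightarrow> 'i \<Rightarrow> complex" where
  "sg \<chi> i = (\<Sum>h\<in>carrier (G i). \<chi> i h)"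

definition gf :: "nat \<Rightarrow> complex \<Rightarrow> ('i \<Rightarrow> 'a \<Rightarrow> complex) \<Rightarrow> 'i \<Rightarrow> complex" where
  "gf m t \<chi> i = (if lv i < m then sg \<chi> i else if lv i = m then 1 + t * (sg \<chi> i - 1) else 1)"

lemma dc_fin: "finite (down_closure \<Omega> leq S)"
  using fin by (simp add: down_closure_def)

lemma phi_eq:
  assumes \<beta>: "\<beta> \<in> prod_carrier \<Omega> G"
  shows "phi m t (wt \<beta>) = (\<Prod>i\<in>\<Omega>. e m t i (\<beta> i))"
proof -
  define S where "S = supp_H \<Omega> G \<beta>"
  have SO: "S \<subseteq> \<Omega>" by (auto simp: S_def supp_H_def)
  have wtS: "wt \<beta> = card (down_closure \<Omega> leq S)" by (simp add: wt_def S_def poset_wt_def)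
  have prodS: "(\<Prod>i\<in>\<Omega>. e m t i (\<beta> i)) =
     (\<Prod>i\<in>\<Omega>. if i \<in> S then (if lv i < m then 1 else if lv i = m then t else 0) else 1)"
    by (intro prod.cong) (auto simp: e_def S_def supp_H_def)
  have cLL: "card (Low m) \<le> card (Low (Suc m))" by (simp add: card_Low_Suc)
  show ?thesis
  proof (cases "\<exists>b\<in>S. m < lv b")
    case True
    then obtain b where b: "b \<in> S" "m < lv b" by blast
    have "b \<in> \<Omega>" using b SO by blast
    hence "(\<Prod>i\<in>\<Omega>. e m t i (\<beta> i)) = 0" unfolding prodS using b fin
      by (intro prod_zero) (auto intro!: bexI[of _ b])
    moreover have "card (insert b (Low (Suc m))) \<le> wt \<beta>"
      unfolding wtS by (intro card_mono dc_fin W3 SO b)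
    moreover have "b \<notin> Low (Suc m)" using b by (simp add: Low_def)
    ultimately show ?thesis using cLL by (simp add: phi_def Low_fin)
  next
    case False
    hence SL: "S \<subseteq> Low (Suc m)" using SO by (force simp: Low_def)
    have "(\<Prod>i\<in>\<Omega>. e m t i (\<beta> i)) = (\<Prod>i\<in>\<Omega>. if i \<in> S \<inter> Lev m then t else 1)"
      unfolding prodS using SL by (intro prod.cong) (auto simp: Low_def Lev_def)
    also have "\<dots> = t ^ card (S \<inter> Lev m)"
    proof -
      have "\<Omega> \<inter> {i. i \<in> S \<inter> Lev m} = S \<inter> Lev m" using SO by auto
      thus ?thesis using prod.If_cases[OF fin, of "\<lambda>i. i \<in> S \<inter> Lev m" "\<lambda>_. t" "\<lambda>_. 1"]
        by simp
    qed
    finally have P: "(\<Prod>i\<in>\<Omega>. e m t i (\<beta> i)) = t ^ card (S \<inter> Lev m)" .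
    show ?thesis
    proof (cases "S \<inter> Lev m = {}")
      case True
      hence "S \<subseteq> Low m" using SL Low_Suc by blast
      hence "wt \<beta> \<le> card (Low m)" unfolding wtS by (intro card_mono Low_fin W1)
      thus ?thesis using P True by (simp add: phi_def)
    next
      case False
      have "wt \<beta> = card (Low m \<union> (S \<inter> Lev m))" unfolding wtS using W2[OF SL False] by simp
      also have "\<dots> = card (Low m) + card (S \<inter> Lev m)"
        using Low_Lev_disj by (intro card_Un_disjoint) (auto simp: Low_fin Lev_fin)
      finally have w: "wt \<beta> = card (Low m) + card (S \<inter> Lev m)" .
      have k: "card (S \<inter> Lev m) > 0" using False Lev_fin by (simp add: card_gt_0_iff)
      have k2: "card (S \<inter> Lev m) \<le> card (Lev m)" using Lev_fin by (intro card_mono) auto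
      show ?thesis using w k k2 P by (simp add: phi_def card_Low_Suc)
    qed
  qed
qed

lemma sum_e:
  assumes i: "i \<in> \<Omega>" and ch: "\<chi> i \<in> characters (G i)"
  shows "(\<Sum>h\<in>carrier (G i). e m t i h * \<chi> i h) = gf m t \<chi> i"
proof -
  have c1: "\<chi> i \<one>\<^bsub>G i\<^esub> = 1" using char_one[OF grpi[OF i] ch] .
  have fc: "finite (carrier (G i))" using finG i .
  have o: "\<one>\<^bsub>G i\<^esub> \<in> carrier (G i)" using one_in i .
  consider "lv i < m" | "lv i = m" | "lv i > m" by linarith
  thus ?thesis
  proof cases
    case 1 thus ?thesis by (simp add: e_def gf_def sg_def)
  next
    case 2
    have "(\<Sum>h\<in>carrier (G i). e m t i h * \<chi> i h)
       = (\<Sum>h\<in>carrier (G i). t * \<chi> i h + (if h = \<one>\<^bsub>G i\<^esub> then (1 - t) * \<chi> i h else 0))"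
      using 2 by (intro sum.cong) (auto simp: e_def algebra_simps)
    also have "\<dots> = t * sg \<chi> i + (1 - t)"
      using fc o c1 by (simp add: sum.distrib sum_distrib_left sg_def)
    finally show ?thesis using 2 by (simp add: gf_def algebra_simps)
  next
    case 3
    have "(\<Sum>h\<in>carrier (G i). e m t i h * \<chi> i h)
       = (\<Sum>h\<in>carrier (G i). (if h = \<one>\<^bsub>G i\<^esub> then \<chi> i h else 0))"
      using 3 by (intro sum.cong) (auto simp: e_def)
    also have "\<dots> = 1" using fc o c1 by simp
    finally show ?thesis using 3 by (simp add: gf_def)
  qed
qed

lemma sum_eq:
  assumes \<chi>: "\<chi> \<in> dual_carrier \<Omega> G"
  shows "(\<Sum>\<beta>\<in>prod_carrier \<Omega> G. phi m t (wt \<beta>) * char_eval \<Omega> \<chi> \<beta>) = (\<Prod>i\<in>\<Omega>. gf m t \<chi> i)"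
proof -
  have "(\<Sum>\<beta>\<in>prod_carrier \<Omega> G. phi m t (wt \<beta>) * char_eval \<Omega> \<chi> \<beta>)
      = (\<Sum>\<beta>\<in>prod_carrier \<Omega> G. \<Prod>i\<in>\<Omega>. e m t i (\<beta> i) * \<chi> i (\<beta> i))"
  proof (rule sum.cong[OF refl])
    fix x assume "x \<in> prod_carrier \<Omega> G"
    thus "phi m t (wt x) * char_eval \<Omega> \<chi> x = (\<Prod>i\<in>\<Omega>. e m t i (x i) * \<chi> i (x i))"
      using phi_eq[of x m t] by (simp add: char_eval_def prod.distrib)
  qed
  also have "\<dots> = (\<Prod>i\<in>\<Omega>. \<Sum>h\<in>carrier (G i). e m t i h * \<chi> i h)"
    unfolding prod_carrier_def using prod_sum_PiE[OF fin finG, where f = "\<lambda>i h. e m t i h * \<chi> i h"]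
    by simp
  also have "\<dots> = (\<Prod>i\<in>\<Omega>. gf m t \<chi> i)"
    using \<chi> by (intro prod.cong refl sum_e) (auto simp: dual_carrier_def)
  finally show ?thesis .
qed

lemma H_fin: "finite (prod_carrier \<Omega> G)"
  unfolding prod_carrier_def using fin finG by (intro finite_PiE) auto

lemma group_sum:
  fixes \<phi> :: "nat \<Rightarrow> complex" and c :: "('i \<Rightarrow> 'a) \<Rightarrow> complex"
  shows
  "(\<Sum>\<beta>\<in>prod_carrier \<Omega> G. \<phi> (wt \<beta>) * c \<beta>)
    = (\<Sum>w\<in>wt ` prod_carrier \<Omega> G. \<phi> w * (\<Sum>\<beta>\<in>{x\<in>prod_carrier \<Omega> G. wt x = w}. c \<beta>))"
proof -
  have "(\<Sum>\<beta>\<in>prod_carrier \<Omega> G. \<phi> (wt \<beta>) * c \<beta>)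
     = (\<Sum>w\<in>wt ` prod_carrier \<Omega> G. \<Sum>\<beta>\<in>{x\<in>prod_carrier \<Omega> G. wt x = w}. \<phi> (wt \<beta>) * c \<beta>)"
    using sum.group[OF H_fin finite_imageI[OF H_fin] subset_refl, where g = wt and h = "\<lambda>\<beta>. \<phi> (wt \<beta>) * c \<beta>"]
    by simp
  also have "\<dots> = (\<Sum>w\<in>wt ` prod_carrier \<Omega> G. \<phi> w * (\<Sum>\<beta>\<in>{x\<in>prod_carrier \<Omega> G. wt x = w}. c \<beta>))"
    by (rule sum.cong[OF refl]) (simp add: sum_distrib_left)
  finally show ?thesis .
qed

lemma Lambda_sums:
  assumes "Lambda_rel \<Omega> G leq \<chi> \<psi>"
  shows "(\<Sum>\<beta>\<in>prod_carrier \<Omega> G. \<phi> (wt \<beta>) * char_eval \<Omega> \<chi> \<beta>)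
       = (\<Sum>\<beta>\<in>prod_carrier \<Omega> G. \<phi> (wt \<beta>) * char_eval \<Omega> \<psi> \<beta>)"
  unfolding group_sum
proof (intro sum.cong refl)
  fix w assume "w \<in> wt ` prod_carrier \<Omega> G"
  then obtain x where x: "x \<in> prod_carrier \<Omega> G" "w = wt x" by blast
  have "{y\<in>prod_carrier \<Omega> G. wt y = w} \<in> Q_H \<Omega> G leq"
    unfolding Q_H_def level_partition_def using x by (auto simp: wt_def)
  thus "\<phi> w * (\<Sum>\<beta>\<in>{x\<in>prod_carrier \<Omega> G. wt x = w}. char_eval \<Omega> \<chi> \<beta>)
      = \<phi> w * (\<Sum>\<beta>\<in>{x\<in>prod_carrier \<Omega> G. wt x = w}. char_eval \<Omega> \<psi> \<beta>)"
    using assms unfolding Lambda_rel_def by simp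
qed

lemma Phi_eq:
  assumes "\<chi> \<in> dual_carrier \<Omega> G" "\<psi> \<in> dual_carrier \<Omega> G" "Lambda_rel \<Omega> G leq \<chi> \<psi>"
  shows "(\<Prod>i\<in>\<Omega>. gf m t \<chi> i) = (\<Prod>i\<in>\<Omega>. gf m t \<psi> i)"
  using Lambda_sums[OF assms(3), of "phi m t"] sum_eq[OF assms(1)] sum_eq[OF assms(2)] by simp

end


context hs begin

abbreviation T where "T \<chi> \<equiv> supp_dual \<Omega> G \<chi>"

lemma T_sub: "T \<chi> \<subseteq> \<Omega>" by (auto simp: supp_dual_def)

lemma card_pos: "i \<in> \<Omega> \<Longrightarrow> card (carrier (G i)) > 0"
  using finG one_in by (auto simp: card_gt_0_iff)

lemma sg_val:
  assumes i: "i \<in> \<Omega>" and \<chi>: "\<chi> \<in> dual_carrier \<Omega> G"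
  shows "sg \<chi> i = (if i \<in> T \<chi> then 0 else of_nat (card (carrier (G i))))"
proof -
  have "\<chi> i \<in> characters (G i)" using \<chi> i by (auto simp: dual_carrier_def)
  thus ?thesis using char_sum[OF grpi[OF i] finG[OF i]] i
    by (simp add: sg_def supp_dual_def)
qed

lemma zero_iff:
  assumes \<chi>: "\<chi> \<in> dual_carrier \<Omega> G"
  shows "(\<Prod>i\<in>\<Omega>. gf m 0 \<chi> i) = 0 \<longleftrightarrow> T \<chi> \<inter> Low m \<noteq> {}"
proof -
  have "(\<Prod>i\<in>\<Omega>. gf m 0 \<chi> i) = 0 \<longleftrightarrow> (\<exists>i\<in>\<Omega>. gf m 0 \<chi> i = 0)"
    using fin by simp
  also have "\<dots> \<longleftrightarrow> (\<exists>i\<in>\<Omega>. lv i < m \<and> i \<in> T \<chi>)"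
  proof -
    have "gf m 0 \<chi> i = 0 \<longleftrightarrow> (lv i < m \<and> i \<in> T \<chi>)" if i: "i \<in> \<Omega>" for i
      using sg_val[OF i \<chi>] card_pos[OF i] by (simp add: gf_def)
    thus ?thesis by blast
  qed
  also have "\<dots> \<longleftrightarrow> T \<chi> \<inter> Low m \<noteq> {}" using T_sub by (auto simp: Low_def)
  finally show ?thesis .
qed

lemma Z:
  assumes "\<chi> \<in> dual_carrier \<Omega> G" "\<psi> \<in> dual_carrier \<Omega> G" "Lambda_rel \<Omega> G leq \<chi> \<psi>"
  shows "T \<chi> \<inter> Low m = {} \<longleftrightarrow> T \<psi> \<inter> Low m = {}"
  using Phi_eq[OF assms, of m 0] zero_iff[OF assms(1), of m] zero_iff[OF assms(2), of m] by metis

lemma exists_level: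
  assumes "X \<subseteq> \<Omega>" "X \<noteq> {}"
  shows "\<exists>m. X \<inter> Low m = {} \<and> X \<inter> Lev m \<noteq> {}"
proof -
  have fX: "finite X" using assms fin finite_subset by blast
  define m where "m = Min (lv ` X)"
  have "m \<in> lv ` X" unfolding m_def using fX assms by (intro Min_in) auto
  then obtain x where x: "x \<in> X" "lv x = m" by auto
  have "\<forall>y\<in>X. m \<le> lv y" unfolding m_def using fX by auto
  hence "X \<inter> Low m = {}" by (auto simp: Low_def)
  moreover have "x \<in> X \<inter> Lev m" using x assms by (auto simp: Lev_def)
  ultimately show ?thesis by blast
qed

lemma level_le:
  assumes "X \<inter> Low a = {}" "Y \<inter> Lev b \<noteq> {}" "\<And>m. X \<inter> Low m = {} \<longleftrightarrow> Y \<inter> Low m = {}"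
  shows "b \<ge> a"
proof (rule ccontr)
  assume "\<not> b \<ge> a"
  hence "Low (Suc b) \<subseteq> Low a" by (intro Low_mono) simp
  hence "X \<inter> Low (Suc b) = {}" using assms(1) by blast
  hence "Y \<inter> Low (Suc b) = {}" using assms(3) by blast
  thus False using assms(2) Low_Suc by blast
qed

lemma dwt_formula:
  assumes TO: "X \<subseteq> \<Omega>" and L: "X \<inter> Low m = {}" and ne: "X \<inter> Lev m \<noteq> {}"
  shows "poset_wt \<Omega> (dual_order leq) X = card (X \<inter> Lev m) + card {x\<in>\<Omega>. m < lv x}"
proof -
  have "down_closure \<Omega> (dual_order leq) X = (X \<inter> Lev m) \<union> {x\<in>\<Omega>. m < lv x}"
  proof
    show "down_closure \<Omega> (dual_order leq) X \<subseteq> (X \<inter> Lev m) \<union> {x\<in>\<Omega>. m < lv x}"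
    proof
      fix x assume "x \<in> down_closure \<Omega> (dual_order leq) X"
      then obtain b where x: "x \<in> \<Omega>" and b: "b \<in> X" and bx: "leq b x"
        unfolding down_closure_def dual_order_def by blast
      have bO: "b \<in> \<Omega>" using b TO by blast
      have "m \<le> lv b" using L b bO by (auto simp: Low_def)
      moreover have "b = x \<or> lv b < lv x" using leq_iff[OF bO x] bx by blast
      ultimately show "x \<in> (X \<inter> Lev m) \<union> {x\<in>\<Omega>. m < lv x}"
        using b x by (auto simp: Lev_def)
    qed
  next
    obtain c where c: "c \<in> X" "c \<in> \<Omega>" "lv c = m" using ne by (auto simp: Lev_def)
    show "(X \<inter> Lev m) \<union> {x\<in>\<Omega>. m < lv x} \<subseteq> down_closure \<Omega> (dual_order leq) X"
    proof
      fix x assume "x \<in> (X \<inter> Lev m) \<union> {x\<in>\<Omega>. m < lv x}"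
      thus "x \<in> down_closure \<Omega> (dual_order leq) X"
      proof
        assume "x \<in> X \<inter> Lev m"
        hence "x \<in> \<Omega>" "x \<in> X" by (auto simp: Lev_def)
        thus ?thesis using prefl unfolding down_closure_def dual_order_def by blast
      next
        assume "x \<in> {x\<in>\<Omega>. m < lv x}"
        hence "x \<in> \<Omega>" "lv c < lv x" using c by auto
        hence "leq c x" using leq_iff[OF c(2)] by blast
        thus ?thesis using c \<open>x \<in> \<Omega>\<close> unfolding down_closure_def dual_order_def by blast
      qed
    qed
  qed
  moreover have "card ((X \<inter> Lev m) \<union> {x\<in>\<Omega>. m < lv x}) = card (X \<inter> Lev m) + card {x\<in>\<Omega>. m < lv x}"
    using fin Lev_fin by (intro card_Un_disjoint) (auto simp: Lev_def)
  ultimately show ?thesis by (simp add: poset_wt_def)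
qed

definition K where "K m i = (if lv i < m then of_nat (card (carrier (G i))) else (1::complex))"

lemma gf_off:
  assumes \<chi>: "\<chi> \<in> dual_carrier \<Omega> G" and L: "T \<chi> \<inter> Low m = {}" and i: "i \<in> \<Omega> - Lev m"
  shows "gf m t \<chi> i = K m i"
  using sg_val[OF _ \<chi>, of i] i L by (auto simp: gf_def K_def Lev_def Low_def)

lemma gf_on:
  assumes \<chi>: "\<chi> \<in> dual_carrier \<Omega> G" and i: "i \<in> Lev m"
  shows "gf m t \<chi> i = (if i \<in> T \<chi> then 1 - t else 1 + t * (of_nat (card (carrier (G i))) - 1))"
  using sg_val[OF _ \<chi>, of i] i by (auto simp: gf_def Lev_def)

definition F :: "nat \<Rightarrow> 'i set \<Rightarrow> complex \<Rightarrow> complex" where "F m X t = (\<Prod>i\<in>Lev m \<inter> - {i. i \<in> X}. 1 + t * (of_nat (card (carrier (G i))) - 1))"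

lemma F_cont: "isCont (F m X) t"
  unfolding F_def[abs_def] by (rule continuous_prod) (intro continuous_intros)

lemma F_one: "F m X 1 \<noteq> 0"
proof -
  have "F m X 1 = (\<Prod>i\<in>Lev m \<inter> - {i. i \<in> X}. of_nat (card (carrier (G i))))"
    unfolding F_def by (intro prod.cong) (auto simp: algebra_simps)
  also have "\<dots> \<noteq> 0" using Lev_fin card_pos by (auto simp: Lev_def)
  finally show ?thesis .
qed

lemma Phi_split:
  assumes \<chi>: "\<chi> \<in> dual_carrier \<Omega> G" and L: "T \<chi> \<inter> Low m = {}"
  shows "(\<Prod>i\<in>\<Omega>. gf m t \<chi> i) = (\<Prod>i\<in>\<Omega> - Lev m. K m i) * ((1 - t) ^ card (T \<chi> \<inter> Lev m) * F m (T \<chi>) t)"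
proof -
  have "(\<Prod>i\<in>\<Omega>. gf m t \<chi> i) = (\<Prod>i\<in>\<Omega> - Lev m. gf m t \<chi> i) * (\<Prod>i\<in>Lev m. gf m t \<chi> i)"
    using fin by (intro prod.subset_diff) (auto simp: Lev_def)
  also have "(\<Prod>i\<in>\<Omega> - Lev m. gf m t \<chi> i) = (\<Prod>i\<in>\<Omega> - Lev m. K m i)"
    using gf_off[OF \<chi> L] by (intro prod.cong) auto
  also have "(\<Prod>i\<in>Lev m. gf m t \<chi> i) = (\<Prod>i\<in>Lev m. if i \<in> T \<chi> then 1 - t else 1 + t * (of_nat (card (carrier (G i))) - 1))"
    using gf_on[OF \<chi>] by (intro prod.cong) auto
  also have "\<dots> = (1 - t) ^ card (T \<chi> \<inter> Lev m) * F m (T \<chi>) t"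
  proof -
    have "Lev m \<inter> {i. i \<in> T \<chi>} = T \<chi> \<inter> Lev m" by auto
    thus ?thesis using prod.If_cases[OF Lev_fin, of "\<lambda>i. i \<in> T \<chi>" "\<lambda>_. 1 - t"
        "\<lambda>i. 1 + t * (of_nat (card (carrier (G i))) - 1)" m]
      by (simp add: F_def)
  qed
  finally show ?thesis .
qed

lemma K_nz: "(\<Prod>i\<in>\<Omega> - Lev m. K m i) \<noteq> 0"
  using fin card_pos by (auto simp: K_def)

lemma count_eq:
  assumes "\<chi> \<in> dual_carrier \<Omega> G" "\<psi> \<in> dual_carrier \<Omega> G" "Lambda_rel \<Omega> G leq \<chi> \<psi>"
    and L1: "T \<chi> \<inter> Low m = {}" and L2: "T \<psi> \<inter> Low m = {}"
  shows "card (T \<chi> \<inter> Lev m) = card (T \<psi> \<inter> Lev m)"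
proof -
  have eq: "(1 - t) ^ card (T \<chi> \<inter> Lev m) * F m (T \<chi>) t = (1 - t) ^ card (T \<psi> \<inter> Lev m) * F m (T \<psi>) t" for t :: complex
    using Phi_eq[OF assms(1-3), of m t] Phi_split[OF assms(1) L1, of t] Phi_split[OF assms(2) L2, of t] K_nz[of m]
    by simp
  show ?thesis
  proof (rule linorder_cases)
    assume "card (T \<chi> \<inter> Lev m) < card (T \<psi> \<inter> Lev m)"
    from pow_count[OF eq F_cont F_cont F_one F_one this] show ?thesis ..
  next
    assume "card (T \<psi> \<inter> Lev m) < card (T \<chi> \<inter> Lev m)"
    from pow_count[OF eq[symmetric] F_cont F_cont F_one F_one this] show ?thesis ..
  qed
qed

lemma main:
  assumes \<chi>: "\<chi> \<in> dual_carrier \<Omega> G" and \<psi>: "\<psi> \<in> dual_carrier \<Omega> G" and R: "Lambda_rel \<Omega> G leq \<chi> \<psi>"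
  shows "poset_wt \<Omega> (dual_order leq) (T \<psi>) = poset_wt \<Omega> (dual_order leq) (T \<chi>)"
proof -
  note Zm = Z[OF \<chi> \<psi> R]
  obtain M where M: "\<forall>i\<in>\<Omega>. lv i < M"
    using finite_nat_set_iff_bounded[of "lv ` \<Omega>"] fin by auto
  have LM: "Low M = \<Omega>" using M by (auto simp: Low_def)
  have emp: "T \<chi> = {} \<longleftrightarrow> T \<psi> = {}"
    using Zm[of M] T_sub[of \<chi>] T_sub[of \<psi>] unfolding LM by blast
  show ?thesis
  proof (cases "T \<chi> = {}")
    case True
    thus ?thesis using emp by (simp add: poset_wt_def down_closure_def)
  next
    case False
    hence F2: "T \<psi> \<noteq> {}" using emp by blast
    obtain a where a: "T \<chi> \<inter> Low a = {}" "T \<chi> \<inter> Lev a \<noteq> {}" using exists_level[OF T_sub False] by blast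
    obtain b where b: "T \<psi> \<inter> Low b = {}" "T \<psi> \<inter> Lev b \<noteq> {}" using exists_level[OF T_sub F2] by blast
    have "a \<le> b" using level_le[OF a(1) b(2)] Zm by blast
    moreover have "b \<le> a" using level_le[OF b(1) a(2)] Zm by blast
    ultimately have ab: "a = b" by simp
    have c: "card (T \<chi> \<inter> Lev a) = card (T \<psi> \<inter> Lev a)"
      using count_eq[OF \<chi> \<psi> R a(1)] b(1) ab by simp
    show ?thesis using dwt_formula[OF T_sub a] dwt_formula[OF T_sub b] ab c by simp
  qed
qed

end

theorem corollary2p2:
  fixes \<Omega> :: "'i set" and G :: "'i \<Rightarrow> ('a, 'b) monoid_scheme" and leq :: "'i \<Rightarrow> 'i \<Rightarrow> bool"
  assumes "finite \<Omega>"
    and "\<And>i. i \<in> \<Omega> \<Longrightarrow> comm_group (G i)"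
    and "\<And>i. i \<in> \<Omega> \<Longrightarrow> finite (carrier (G i))"
    and "poset_on \<Omega> leq"
    and "hierarchical \<Omega> leq"
  shows "finer (Lambda \<Omega> G leq) (Q_dual \<Omega> G leq)"
proof -
  interpret hs \<Omega> G leq using assms by (simp add: hs_def)
  show ?thesis
    unfolding finer_def
  proof
    fix A assume "A \<in> Lambda \<Omega> G leq"
    then obtain \<chi> where \<chi>: "\<chi> \<in> dual_carrier \<Omega> G"
      and A: "A = {\<psi>\<in>dual_carrier \<Omega> G. Lambda_rel \<Omega> G leq \<chi> \<psi>}"
      unfolding Lambda_def by blast
    let ?B = "{\<psi>\<in>dual_carrier \<Omega> G. poset_wt \<Omega> (dual_order leq) (supp_dual \<Omega> G \<psi>)
                = poset_wt \<Omega> (dual_order leq) (supp_dual \<Omega> G \<chi>)}"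
    have "?B \<in> Q_dual \<Omega> G leq"
      unfolding Q_dual_def level_partition_def using \<chi> by blast
    moreover have "A \<subseteq> ?B" unfolding A using main[OF \<chi>] by blast
    ultimately show "\<exists>B\<in>Q_dual \<Omega> G leq. A \<subseteq> B" by blast
  qed
qed

end
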